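(* Fix $J\in\mathbb Z_{>0}$, $i_1,j_1,i_2\in\mathbb Z_{\ge0}$ and $j_2\in\{0,\dots,J\}$. Then $$W_J(i_1,j_1;i_2,j_2\mid v,\lambda)=\sum_{k=0}^J W_{j_2}\big(i_1,k;\,i_1+k-j_2,\,j_2\mid v,\,\lambda-2\eta(J-2j_1-j_2+2k)\big)\,W_{J-j_2}\big(i_1+k-j_2,\,j_1-k;\,i_2,\,0\mid v+2\eta j_2,\,\lambda\big),$$ with the conventions that $W_0(i,0;i,0\mid\cdot)=1$, $W_0(i,j;i',j')=0$ if $(j,j')\neq(0,0)$ or $i\ne i'$, and any weight with a negative argument is $0$.
   Context: Fix $\eta,\tau\in\mathbb C$, $\operatorname{Im}\tau>0$. $f(z)$ denotes either $\theta(z)=-\sum_{j\in\mathbb Z}\exp\big(\pi\mathbf i\tau(j+\tfrac12)^2+2\pi\mathbf i(j+\tfrac12)(z+\tfrac12)\big)$ or $\sin(\pi z)$. Unfused weights ($k\ge0$): $W_1(k,0;k,0\mid v,\lambda,\Lambda)=\frac{f(\eta(\Lambda-2k)-v)f(\lambda+2k\eta)}{f(\eta\Lambda-v)f(\lambda)}$, $W_1(k,1;k+1,0\mid\cdot)=\frac{f(v+\lambda+\eta(2k+2-\Lambda))f(2\eta)}{f(\eta\Lambda-v)f(\lambda)}$, $W_1(k,0;k-1,1\mid\cdot)=\frac{f(\lambda-v+\eta(2k-2-\Lambda))f(2\eta(\Lambda+1-k))f(2k\eta)}{f(\eta\Lambda-v)f(\lambda)f(2\eta)}$ ($k\ge1$),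 $W_1(k,1;k,1\mid\cdot)=\frac{f(\eta(2k-\Lambda)-v)f(\lambda+2\eta(k-\Lambda))}{f(\eta\Lambda-v)f(\lambda)}$, and $0$ otherwise. Column weights: for $\mathcal J_1=(j_{1,k})_{k=1}^J,\mathcal J_2=(j_{2,k})_{k=1}^J\in\{0,1\}^J$, $i^{(1)}=i_1$, $i^{(k+1)}=i^{(k)}+j_{1,k}-j_{2,k}$, $\Phi_J=\lambda$, $\Phi_k=\Phi_{k+1}\mp2\eta$ according as $j_{1,k+1}=0$ or $1$; $W_J(i_1,\mathcal J_1;i_2,\mathcal J_2\mid v,\lambda)=\prod_{k=1}^JW_1(i^{(k)},j_{1,k};i^{(k+1)},j_{2,k}\mid v+2\eta(k-1),\Phi_k,\Lambda)$ if all $i^{(k)}\ge0$ and $i^{(J+1)}=i_2$, else $0$. Fused weight: $W_J(i_1,j_1;i_2,j_2\mid v,\lambda)=\sum_{|\mathcal J_1|=j_1}W_J(i_1,\mathcal J_1;i_2,\mathcal K\mid v,\lambda)$ for any $\mathcal K$ with $|\mathcal K|=j_2$ (independent of $\mathcal K$); $\Lambda$ is suppressed. *)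

theory Defs
  imports "HOL-Analysis.Analysis"
begin

definition theta_fn :: "complex \<Rightarrow> complex \<Rightarrow> complex" where
  "theta_fn \<tau> z = - (\<Sum>\<^sub>\<infinity>j\<in>(UNIV::int set).
      exp (pi * \<i> * \<tau> * (of_int j + 1/2)^2 + 2 * pi * \<i> * (of_int j + 1/2) * (z + 1/2)))"

definition sin_fn :: "complex \<Rightarrow> complex" where
  "sin_fn z = sin (of_real pi * z)"

definition W1 :: "(complex \<Rightarrow> complex) \<Rightarrow> complex \<Rightarrow> complex \<Rightarrow>
    int \<Rightarrow> int \<Rightarrow> int \<Rightarrow> int \<Rightarrow> complex \<Rightarrow> complex \<Rightarrow> complex" where
  "W1 f \<eta> \<Lambda> k j1 k' j2 v lam =
    (if k < 0 then 0
     else if j1 = 0 \<and> j2 = 0 \<and> k' = k then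
       f (\<eta> * (\<Lambda> - 2 * of_int k) - v) * f (lam + 2 * of_int k * \<eta>) / (f (\<eta> * \<Lambda> - v) * f lam)
     else if j1 = 1 \<and> j2 = 0 \<and> k' = k + 1 then
       f (v + lam + \<eta> * (2 * of_int k + 2 - \<Lambda>)) * f (2 * \<eta>) / (f (\<eta> * \<Lambda> - v) * f lam)
     else if j1 = 0 \<and> j2 = 1 \<and> k' = k - 1 \<and> k \<ge> 1 then
       f (lam - v + \<eta> * (2 * of_int k - 2 - \<Lambda>)) * f (2 * \<eta> * (\<Lambda> + 1 - of_int k)) * f (2 * of_int k * \<eta>)
         / (f (\<eta> * \<Lambda> - v) * f lam * f (2 * \<eta>))
     else if j1 = 1 \<and> j2 = 1 \<and> k' = k then
       f (\<eta> * (2 * of_int k - \<Lambda>) - v) * f (lam + 2 * \<eta> * (of_int k - \<Lambda>)) / (f (\<eta> * \<Lambda> - v) * f lam)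
     else 0)"

definition bits :: "nat \<Rightarrow> int \<Rightarrow> int list set" where
  "bits n s = {xs. length xs = n \<and> set xs \<subseteq> {0, 1} \<and> sum_list xs = s}"

text \<open>Column weight W_J(i1, J1; i2, K | v, lambda), J = length J1, 0-indexed:
  the m-th vertex (m = 0..J-1, paper index k = m+1) has horizontal entry
  ipos m = i1 + sum_{l<m} (J1!l - K!l), spectral parameter v + 2 eta m and
  dynamical parameter Phi m = lambda - 2 eta sum_{l=m+1}^{J-1} (1 - 2 J1!l).\<close>
definition ipos :: "int \<Rightarrow> int list \<Rightarrow> int list \<Rightarrow> nat \<Rightarrow> int" where
  "ipos i1 J1 K m = i1 + (\<Sum>l<m. J1 ! l - K ! l)"

definition Phi :: "complex \<Rightarrow> int list \<Rightarrow> complex \<Rightarrow> nat \<Rightarrow> complex" where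
  "Phi \<eta> J1 lam m = lam - 2 * \<eta> * of_int (\<Sum>l\<in>{m+1..<length J1}. 1 - 2 * J1 ! l)"

definition Wcol :: "(complex \<Rightarrow> complex) \<Rightarrow> complex \<Rightarrow> complex \<Rightarrow>
    int \<Rightarrow> int list \<Rightarrow> int \<Rightarrow> int list \<Rightarrow> complex \<Rightarrow> complex \<Rightarrow> complex" where
  "Wcol f \<eta> \<Lambda> i1 J1 i2 K v lam =
    (if (\<forall>m\<le>length J1. ipos i1 J1 K m \<ge> 0) \<and> ipos i1 J1 K (length J1) = i2
     then (\<Prod>m<length J1. W1 f \<eta> \<Lambda> (ipos i1 J1 K m) (J1 ! m) (ipos i1 J1 K (Suc m)) (K ! m)
                                (v + 2 * \<eta> * of_nat m) (Phi \<eta> J1 lam m))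
     else 0)"

definition WfusedK :: "(complex \<Rightarrow> complex) \<Rightarrow> complex \<Rightarrow> complex \<Rightarrow> nat \<Rightarrow>
    int \<Rightarrow> int \<Rightarrow> int \<Rightarrow> int list \<Rightarrow> complex \<Rightarrow> complex \<Rightarrow> complex" where
  "WfusedK f \<eta> \<Lambda> J i1 j1 i2 K v lam = (\<Sum>J1\<in>bits J j1. Wcol f \<eta> \<Lambda> i1 J1 i2 K v lam)"

text \<open>Fused weight W_J(i1,j1;i2,j2 | v,lambda): zero when j2 is not in {0..J}
  (negative arguments give zero); otherwise computed with the word K = 1^j2 0^(J-j2).
  (Only the cases j2 = J and j2 = 0, where K is unique, are used in the statement.)\<close>
definition Wfused :: "(complex \<Rightarrow> complex) \<Rightarrow> complex \<Rightarrow> complex \<Rightarrow> nat \<Rightarrow>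
    int \<Rightarrow> int \<Rightarrow> int \<Rightarrow> int \<Rightarrow> complex \<Rightarrow> complex \<Rightarrow> complex" where
  "Wfused f \<eta> \<Lambda> J i1 j1 i2 j2 v lam =
    (if i1 < 0 \<or> j1 < 0 \<or> i2 < 0 \<or> j2 < 0 \<or> j2 > int J then 0
     else WfusedK f \<eta> \<Lambda> J i1 j1 i2 (replicate (nat j2) 1 @ replicate (J - nat j2) 0) v lam)"

end

theory Submission
  imports Defs
begin

locale wl =
  fixes f :: "complex \<Rightarrow> complex" and \<eta> \<Lambda> :: complex
begin

fun col :: "int \<Rightarrow> int list \<Rightarrow> int list \<Rightarrow> int \<Rightarrow> complex \<Rightarrow> complex \<Rightarrow> complex" where
  "col i [] cs i2 v lam = (if cs = [] \<and> i = i2 \<and> 0 \<le> i then 1 else 0)"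
| "col i (a#as) [] i2 v lam = 0"
| "col i (a#as) (c#cs) i2 v lam =
     W1 f \<eta> \<Lambda> i a (i+a-c) c v (lam - 2*\<eta>* of_int (int (length as) - 2 * sum_list as))
     * col (i+a-c) as cs i2 (v + 2*\<eta>) lam"

lemma ipos_0[simp]: "ipos i1 J1 K 0 = i1"
  by (simp add: ipos_def)

lemma ipos_Suc: "ipos i1 (a#as) (c#cs) (Suc m) = ipos (i1+a-c) as cs m"
  unfolding ipos_def sum.lessThan_Suc_shift by simp

lemma Phi_Suc: "Phi \<eta> (a#as) lam (Suc m) = Phi \<eta> as lam m"
proof -
  have "(\<Sum>l\<in>{Suc (Suc m)..<Suc (length as)}. 1 - 2 * (a#as) ! l)
      = (\<Sum>l\<in>{Suc m..<length as}. 1 - 2 * as ! l)"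
    unfolding sum.shift_bounds_Suc_ivl by simp
  thus ?thesis unfolding Phi_def by simp
qed

lemma sum_nth_eq: "(\<Sum>l<length as. (1::int) - 2 * as ! l) = int (length as) - 2 * sum_list as"
proof -
  have "(\<Sum>l<length as. (1::int) - 2 * as ! l) = (\<Sum>l<length as. 1) - 2 * (\<Sum>l<length as. as ! l)"
    by (simp add: sum_subtractf sum_distrib_left)
  also have "(\<Sum>l<length as. as ! l) = sum_list as"
    by (simp add: sum_list_sum_nth atLeast0LessThan)
  finally show ?thesis by simp
qed

lemma Phi_0: "Phi \<eta> (a#as) lam 0 = lam - 2*\<eta>* of_int (int (length as) - 2 * sum_list as)"
proof -
  have "(\<Sum>l\<in>{Suc 0..<Suc (length as)}. 1 - 2 * (a#as) ! l)
      = (\<Sum>l\<in>{0..<length as}. 1 - 2 * as ! l)"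
    unfolding sum.shift_bounds_Suc_ivl by simp
  also have "\<dots> = int (length as) - 2 * sum_list as"
    using sum_nth_eq[of as] by (simp add: atLeast0LessThan)
  finally show ?thesis unfolding Phi_def by simp
qed

lemma all_le_Suc_conv: "(\<forall>m\<le>Suc n. P m) \<longleftrightarrow> P 0 \<and> (\<forall>m\<le>n. P (Suc m))"
  by (auto, case_tac m, auto)

lemma W1_neg[simp]: "k < 0 \<Longrightarrow> W1 f \<eta> \<Lambda> k a k' c v lam = 0"
  by (simp add: W1_def)

lemma Wcol_col:
  "length J1 = length K \<Longrightarrow> Wcol f \<eta> \<Lambda> i1 J1 i2 K v lam = col i1 J1 K i2 v lam"
proof (induction J1 arbitrary: i1 K v)
  case Nil
  then show ?case by (simp add: Wcol_def ipos_def)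
next
  case (Cons a as)
  then obtain c cs where K: "K = c#cs" and len: "length as = length cs"
    by (cases K) auto
  have IH: "Wcol f \<eta> \<Lambda> (i1+a-c) as i2 cs (v+2*\<eta>) lam = col (i1+a-c) as cs i2 (v+2*\<eta>) lam"
    using Cons.IH len by blast
  have cond: "((\<forall>m\<le>length (a#as). ipos i1 (a#as) K m \<ge> 0) \<and> ipos i1 (a#as) K (length (a#as)) = i2)
     \<longleftrightarrow> i1 \<ge> 0 \<and> ((\<forall>m\<le>length as. ipos (i1+a-c) as cs m \<ge> 0) \<and> ipos (i1+a-c) as cs (length as) = i2)"
    (is "?L \<longleftrightarrow> _")
  proof -
    have "(\<forall>m\<le>Suc (length as). ipos i1 (a#as) K m \<ge> 0) \<longleftrightarrow>
          i1 \<ge> 0 \<and> (\<forall>m\<le>length as. ipos (i1+a-c) as cs m \<ge> 0)"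
      unfolding K
      by (simp add: all_le_Suc_conv ipos_Suc)
    thus ?thesis by (simp add: K ipos_Suc)
  qed
  have prod: "(\<Prod>m<length (a#as). W1 f \<eta> \<Lambda> (ipos i1 (a#as) K m) ((a#as) ! m) (ipos i1 (a#as) K (Suc m)) (K ! m)
                                (v + 2 * \<eta> * of_nat m) (Phi \<eta> (a#as) lam m))
     = W1 f \<eta> \<Lambda> i1 a (i1+a-c) c v (lam - 2*\<eta>* of_int (int (length as) - 2 * sum_list as)) *
       (\<Prod>m<length as. W1 f \<eta> \<Lambda> (ipos (i1+a-c) as cs m) (as ! m) (ipos (i1+a-c) as cs (Suc m)) (cs ! m)
                                ((v + 2*\<eta>) + 2 * \<eta> * of_nat m) (Phi \<eta> as lam m))"
    unfolding K length_Cons prod.lessThan_Suc_shift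
    by (simp add: ipos_Suc Phi_Suc Phi_0 algebra_simps)
  show ?case
  proof (cases "i1 \<ge> 0")
    case True
    have "Wcol f \<eta> \<Lambda> i1 (a#as) i2 K v lam = W1 f \<eta> \<Lambda> i1 a (i1+a-c) c v (lam - 2*\<eta> * of_int (int (length as) - 2 * sum_list as))
       * Wcol f \<eta> \<Lambda> (i1+a-c) as i2 cs (v+2*\<eta>) lam"
      unfolding Wcol_def[of _ _ _ _ "a#as"] cond prod using True K by (auto simp add: Wcol_def)
    then show ?thesis using IH K by simp
  next
    case False
    have "Wcol f \<eta> \<Lambda> i1 (a#as) i2 K v lam = 0"
      unfolding Wcol_def[of _ _ _ _ "a#as"] using cond False by (simp only: if_False) simp
    then show ?thesis using False K by simp
  qed
qed

lemma bits_0: "bits 0 j = (if j = 0 then {[]} else {})"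
  by (auto simp: bits_def)

lemma bits_Suc: "bits (Suc n) j = Cons 0 ` bits n j \<union> Cons 1 ` bits n (j-1)"
proof
  show "bits (Suc n) j \<subseteq> Cons 0 ` bits n j \<union> Cons 1 ` bits n (j-1)"
  proof
    fix xs assume "xs \<in> bits (Suc n) j"
    moreover obtain x ys where xs: "xs = x#ys" using \<open>xs \<in> bits (Suc n) j\<close> by (cases xs) (auto simp: bits_def)
    ultimately show "xs \<in> Cons 0 ` bits n j \<union> Cons 1 ` bits n (j-1)"
      by (auto simp: bits_def)
  qed
qed (auto simp: bits_def)

lemma finite_bits[simp]: "finite (bits n j)"
proof -
  have "bits n j \<subseteq> {xs. set xs \<subseteq> {0,1} \<and> length xs = n}" by (auto simp: bits_def)
  moreover have "finite {xs. set xs \<subseteq> ({0,1}::int set) \<and> length xs = n}"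
    by (rule finite_lists_length_eq) simp
  ultimately show ?thesis by (rule finite_subset)
qed

lemma bits_len: "xs \<in> bits n j \<Longrightarrow> length xs = n" by (simp add: bits_def)
lemma bits_sum: "xs \<in> bits n j \<Longrightarrow> sum_list xs = j" by (simp add: bits_def)

definition S :: "int \<Rightarrow> int \<Rightarrow> int \<Rightarrow> int list \<Rightarrow> complex \<Rightarrow> complex \<Rightarrow> complex" where
  "S i j i2 K v lam = (\<Sum>as\<in>bits (length K) j. col i as K i2 v lam)"

lemma S_Nil: "S i j i2 [] v lam = (if j = 0 \<and> i = i2 \<and> 0 \<le> i then 1 else 0)"
  by (simp add: S_def bits_0)

lemma S_Cons: "S i j i2 (c#cs) v lam =
   W1 f \<eta> \<Lambda> i 0 (i-c) c v (lam - 2*\<eta> * of_int (int (length cs) - 2*j)) * S (i-c) j i2 cs (v+2*\<eta>) lam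
 + W1 f \<eta> \<Lambda> i 1 (i+1-c) c v (lam - 2*\<eta> * of_int (int (length cs) - 2*(j-1))) * S (i+1-c) (j-1) i2 cs (v+2*\<eta>) lam"
proof -
  have d: "Cons 0 ` bits (length cs) j \<inter> Cons 1 ` bits (length cs) (j-1) = {}" by auto
  have "S i j i2 (c#cs) v lam = (\<Sum>as\<in>bits (length cs) j. col i (0#as) (c#cs) i2 v lam)
      + (\<Sum>as\<in>bits (length cs) (j-1). col i (1#as) (c#cs) i2 v lam)"
    unfolding S_def length_Cons bits_Suc
    by (subst sum.union_disjoint[OF _ _ d]; simp add: sum.reindex)
  also have "(\<Sum>as\<in>bits (length cs) j. col i (0#as) (c#cs) i2 v lam)
     = W1 f \<eta> \<Lambda> i 0 (i-c) c v (lam - 2*\<eta> * of_int (int (length cs) - 2*j)) * S (i-c) j i2 cs (v+2*\<eta>) lam"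
    unfolding S_def sum_distrib_left
    by (rule sum.cong) (auto simp: bits_len bits_sum)
  also have "(\<Sum>as\<in>bits (length cs) (j-1). col i (1#as) (c#cs) i2 v lam)
     = W1 f \<eta> \<Lambda> i 1 (i+1-c) c v (lam - 2*\<eta> * of_int (int (length cs) - 2*(j-1))) * S (i+1-c) (j-1) i2 cs (v+2*\<eta>) lam"
    unfolding S_def sum_distrib_left
    by (rule sum.cong) (auto simp: bits_len bits_sum)
  finally show ?thesis .
qed

lemma S_neg_start: "i < 0 \<Longrightarrow> S i j i2 cs v lam = 0"
  by (cases cs) (simp_all add: S_Nil S_Cons)

lemma S_neg_end: "i2 < 0 \<Longrightarrow> S i j i2 cs v lam = 0"
  by (induction cs arbitrary: i j v) (auto simp: S_Nil S_Cons)

lemma S_neg_j: "j < 0 \<Longrightarrow> S i j i2 cs v lam = 0"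
  by (induction cs arbitrary: i j v) (auto simp: S_Nil S_Cons)

lemma S_big_j: "j > int (length cs) \<Longrightarrow> S i j i2 cs v lam = 0"
  by (induction cs arbitrary: i j v) (auto simp: S_Nil S_Cons)

lemma WfusedK_S: "length K = J \<Longrightarrow> WfusedK f \<eta> \<Lambda> J i1 j1 i2 K v lam = S i1 j1 i2 K v lam"
  unfolding WfusedK_def S_def
  by (rule sum.cong) (auto simp: bits_len Wcol_col)

lemma S_split:
  "length cs \<le> N \<Longrightarrow> S i j i2 (cs@ds) v lam =
    (\<Sum>k=0..N. S i (int k) (i + int k - sum_list cs) cs v (lam - 2*\<eta> * of_int (int (length ds) - 2*(j - int k)))
        * S (i + int k - sum_list cs) (j - int k) i2 ds (v + 2*\<eta> * of_nat (length cs)) lam)"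
proof (induction cs arbitrary: i j v N)
  case Nil
  have "(\<Sum>k=0..N. S i (int k) (i + int k - sum_list []) [] v (lam - 2*\<eta> * of_int (int (length ds) - 2*(j - int k)))
        * S (i + int k - sum_list []) (j - int k) i2 ds (v + 2*\<eta> * of_nat (length [])) lam)
     = (\<Sum>k=0..N. if k = 0 then (if 0 \<le> i then S i j i2 ds v lam else 0) else 0)"
    by (rule sum.cong) (auto simp: S_Nil)
  also have "\<dots> = S i j i2 ds v lam" by (simp add: S_neg_start)
  finally show ?case by simp
next
  case (Cons c cs)
  obtain M where N: "N = Suc M" and M: "length cs \<le> M" using Cons.prems by (cases N) auto
  define n where "n = length cs"
  define W0 where "W0 = W1 f \<eta> \<Lambda> i 0 (i-c) c v (lam - 2*\<eta> * of_int (int (length (cs@ds)) - 2*j))"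
  define W1' where "W1' = W1 f \<eta> \<Lambda> i 1 (i+1-c) c v (lam - 2*\<eta> * of_int (int (length (cs@ds)) - 2*(j-1)))"
  define A where "A k = S (i-c) (int k) (i + int k - sum_list (c#cs)) cs (v+2*\<eta>) (lam - 2*\<eta> * of_int (int (length ds) - 2*(j - int k)))
        * S (i + int k - sum_list (c#cs)) (j - int k) i2 ds (v + 2*\<eta> * of_nat (length (c#cs))) lam" for k
  define B where "B k = S (i+1-c) (int k - 1) (i + int k - sum_list (c#cs)) cs (v+2*\<eta>) (lam - 2*\<eta> * of_int (int (length ds) - 2*(j - int k)))
        * S (i + int k - sum_list (c#cs)) (j - int k) i2 ds (v + 2*\<eta> * of_nat (length (c#cs))) lam" for k
  have lhs: "S i j i2 ((c#cs)@ds) v lam = W0 * S (i-c) j i2 (cs@ds) (v+2*\<eta>) lam + W1' * S (i+1-c) (j-1) i2 (cs@ds) (v+2*\<eta>) lam"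
    unfolding W0_def W1'_def by (simp add: S_Cons)
  have ih1: "S (i-c) j i2 (cs@ds) (v+2*\<eta>) lam = (\<Sum>k=0..N. A k)"
    unfolding Cons.IH[OF Cons.prems[unfolded length_Cons, THEN Suc_leD]] A_def
    by (rule sum.cong) (simp_all add: algebra_simps)
  have ih2: "S (i+1-c) (j-1) i2 (cs@ds) (v+2*\<eta>) lam = (\<Sum>k=0..M. B (Suc k))"
    unfolding Cons.IH[OF M] B_def
    by (rule sum.cong) (simp_all add: algebra_simps)
  have B0: "B 0 = 0" by (simp add: B_def S_neg_j)
  have rhs_term: "S i (int k) (i + int k - sum_list (c#cs)) (c#cs) v (lam - 2*\<eta> * of_int (int (length ds) - 2*(j - int k)))
        * S (i + int k - sum_list (c#cs)) (j - int k) i2 ds (v + 2*\<eta> * of_nat (length (c#cs))) lam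
      = W0 * A k + W1' * B k" for k
  proof -
    have e0: "lam - 2*\<eta> * of_int (int (length ds) - 2*(j - int k)) - 2*\<eta> * of_int (int (length cs) - 2 * int k)
       = lam - 2*\<eta> * of_int (int (length (cs@ds)) - 2*j)"
      by (simp add: algebra_simps)
    have e1: "lam - 2*\<eta> * of_int (int (length ds) - 2*(j - int k)) - 2*\<eta> * of_int (int (length cs) - 2 * (int k - 1))
       = lam - 2*\<eta> * of_int (int (length (cs@ds)) - 2*(j-1))"
      by (simp add: algebra_simps)
    show ?thesis
      unfolding S_Cons e0 e1 W0_def W1'_def A_def B_def by (simp add: algebra_simps)
  qed
  have "(\<Sum>k=0..N. W0 * A k + W1' * B k) = W0 * (\<Sum>k=0..N. A k) + W1' * (\<Sum>k=0..N. B k)"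
    by (simp add: sum.distrib sum_distrib_left)
  also have "(\<Sum>k=0..N. B k) = (\<Sum>k=0..M. B (Suc k))"
    unfolding N sum.atLeast0_atMost_Suc_shift B0 by simp
  finally show ?case
    unfolding lhs ih1 ih2 rhs_term by simp
qed

end

locale wl2 = wl +
  fixes Ee Oo :: "complex \<Rightarrow> complex"
  assumes f_odd: "\<And>x. f (- x) = - f x"
    and f_prod: "\<And>x y. f (x + y) * f (x - y) = Ee x * Oo y - Oo x * Ee y"
    and eta_nz: "f (2*\<eta>) \<noteq> 0"
begin

lemma f0[simp]: "f 0 = 0"
  using f_odd[of 0] by simp

definition gv where "gv v \<longleftrightarrow> (\<forall>m::int. f (\<eta> * \<Lambda> - v - 2 * \<eta> * of_int m) \<noteq> 0)"
definition gl where "gl \<mu> \<longleftrightarrow> (\<forall>m::int. f (\<mu> + 2 * \<eta> * of_int m) \<noteq> 0)"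

lemma gv_shift: "gv v \<Longrightarrow> gv (v + 2*\<eta>* of_int k)"
  unfolding gv_def
proof
  fix m :: int assume h: "\<forall>m::int. f (\<eta> * \<Lambda> - v - 2 * \<eta> * of_int m) \<noteq> 0"
  have "\<eta> * \<Lambda> - (v + 2*\<eta>* of_int k) - 2 * \<eta> * of_int m = \<eta> * \<Lambda> - v - 2 * \<eta> * of_int (k+m)"
    by (simp add: algebra_simps)
  thus "f (\<eta> * \<Lambda> - (v + 2*\<eta>* of_int k) - 2 * \<eta> * of_int m) \<noteq> 0" using h[rule_format, of "k+m"] by metis
qed

lemma gv_shift2: "gv v \<Longrightarrow> gv (v + 2*\<eta>)"
  using gv_shift[of v 1] by simp

lemma gl_shift: "gl \<mu> \<Longrightarrow> gl (\<mu> + 2*\<eta>* of_int k)"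
  unfolding gl_def
proof
  fix m :: int assume h: "\<forall>m::int. f (\<mu> + 2 * \<eta> * of_int m) \<noteq> 0"
  have "\<mu> + 2*\<eta>* of_int k + 2 * \<eta> * of_int m = \<mu> + 2 * \<eta> * of_int (k+m)"
    by (simp add: algebra_simps)
  thus "f (\<mu> + 2*\<eta>* of_int k + 2 * \<eta> * of_int m) \<noteq> 0" using h[rule_format, of "k+m"] by metis
qed

lemma gv_nz:
  assumes "gv v" shows "f (\<eta> * \<Lambda> - v) \<noteq> 0" "f (\<eta> * \<Lambda> - (v + 2*\<eta>)) \<noteq> 0"
proof -
  show "f (\<eta> * \<Lambda> - v) \<noteq> 0" using assms[unfolded gv_def, rule_format, of 0] by simp
  have "\<eta> * \<Lambda> - (v + 2*\<eta>) = \<eta> * \<Lambda> - v - 2 * \<eta> * of_int 1" by simp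
  thus "f (\<eta> * \<Lambda> - (v + 2*\<eta>)) \<noteq> 0" using assms[unfolded gv_def, rule_format, of 1] by metis
qed

lemma gl_nz:
  assumes "gl \<mu>" shows "f \<mu> \<noteq> 0" "f (\<mu> - 2*\<eta>) \<noteq> 0" "f (\<mu> + 2*\<eta>) \<noteq> 0"
proof -
  show "f \<mu> \<noteq> 0" using assms[unfolded gl_def, rule_format, of 0] by simp
  have "\<mu> - 2*\<eta> = \<mu> + 2 * \<eta> * of_int (-1)" by simp
  thus "f (\<mu> - 2*\<eta>) \<noteq> 0" using assms[unfolded gl_def, rule_format, of "-1"] by metis
  have "\<mu> + 2*\<eta> = \<mu> + 2 * \<eta> * of_int 1" by simp
  thus "f (\<mu> + 2*\<eta>) \<noteq> 0" using assms[unfolded gl_def, rule_format, of "1"] by metis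
qed

lemma W1_00: "0 \<le> k \<Longrightarrow> W1 f \<eta> \<Lambda> k 0 k 0 v lam =
   f (\<eta> * (\<Lambda> - 2 * of_int k) - v) * f (lam + 2 * of_int k * \<eta>) / (f (\<eta> * \<Lambda> - v) * f lam)"
  by (simp add: W1_def)
lemma W1_10: "0 \<le> k \<Longrightarrow> W1 f \<eta> \<Lambda> k 1 (k+1) 0 v lam =
   f (v + lam + \<eta> * (2 * of_int k + 2 - \<Lambda>)) * f (2 * \<eta>) / (f (\<eta> * \<Lambda> - v) * f lam)"
  by (simp add: W1_def)
lemma W1_01: "0 \<le> k \<Longrightarrow> W1 f \<eta> \<Lambda> k 0 (k-1) 1 v lam =
   f (lam - v + \<eta> * (2 * of_int k - 2 - \<Lambda>)) * f (2 * \<eta> * (\<Lambda> + 1 - of_int k)) * f (2 * of_int k * \<eta>)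
         / (f (\<eta> * \<Lambda> - v) * f lam * f (2 * \<eta>))"
  by (cases "k = 0") (auto simp: W1_def)
lemma W1_11: "0 \<le> k \<Longrightarrow> W1 f \<eta> \<Lambda> k 1 k 1 v lam =
   f (\<eta> * (2 * of_int k - \<Lambda>) - v) * f (lam + 2 * \<eta> * (of_int k - \<Lambda>)) / (f (\<eta> * \<Lambda> - v) * f lam)"
  by (simp add: W1_def)

definition br where "br x y = Ee x * Oo y - Oo x * Ee y"

lemma pair: "f (x + y) * f (x - y) = br x y"
  unfolding br_def by (rule f_prod)

lemma argeq: "a = b \<Longrightarrow> f a = f b" by simp
lemma argeq_neg: "a = - b \<Longrightarrow> f a = - f b" by (simp add: f_odd)

lemma L1F:
  fixes I v \<mu> :: complex
  assumes nz: "f (\<eta> * \<Lambda> - v) \<noteq> 0" "f (\<eta> * \<Lambda> - (v + 2*\<eta>)) \<noteq> 0" "f \<mu> \<noteq> 0"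
     "f (\<mu> - 2*\<eta>) \<noteq> 0" "f (\<mu> + 2*\<eta>) \<noteq> 0"
  shows
  "f (\<eta> * (2 * I - \<Lambda>) - v) * f ((\<mu> - 2*\<eta>) + 2 * \<eta> * (I - \<Lambda>)) / (f (\<eta> * \<Lambda> - v) * f (\<mu> - 2*\<eta>))
   * (f (\<eta> * (\<Lambda> - 2 * I) - (v + 2*\<eta>)) * f (\<mu> + 2 * I * \<eta>) / (f (\<eta> * \<Lambda> - (v + 2*\<eta>)) * f \<mu>))
 + f ((\<mu> + 2*\<eta>) - v + \<eta> * (2 * I - 2 - \<Lambda>)) * f (2 * \<eta> * (\<Lambda> + 1 - I)) * f (2 * I * \<eta>) / (f (\<eta> * \<Lambda> - v) * f (\<mu> + 2*\<eta>) * f (2 * \<eta>))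
   * (f ((v + 2*\<eta>) + \<mu> + \<eta> * (2 * (I - 1) + 2 - \<Lambda>)) * f (2 * \<eta>) / (f (\<eta> * \<Lambda> - (v + 2*\<eta>)) * f \<mu>))
 = f (v + (\<mu> - 2*\<eta>) + \<eta> * (2 * I + 2 - \<Lambda>)) * f (2 * \<eta>) / (f (\<eta> * \<Lambda> - v) * f (\<mu> - 2*\<eta>))
   * (f (\<mu> - (v + 2*\<eta>) + \<eta> * (2 * (I + 1) - 2 - \<Lambda>)) * f (2 * \<eta> * (\<Lambda> + 1 - (I + 1))) * f (2 * (I + 1) * \<eta>) / (f (\<eta> * \<Lambda> - (v + 2*\<eta>)) * f \<mu> * f (2 * \<eta>)))
 + f (\<eta> * (\<Lambda> - 2 * I) - v) * f ((\<mu> + 2*\<eta>) + 2 * I * \<eta>) / (f (\<eta> * \<Lambda> - v) * f (\<mu> + 2*\<eta>))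
   * (f (\<eta> * (2 * I - \<Lambda>) - (v + 2*\<eta>)) * f (\<mu> + 2 * \<eta> * (I - \<Lambda>)) / (f (\<eta> * \<Lambda> - (v + 2*\<eta>)) * f \<mu>))"
  (is "?T1 + ?T2 = ?T3 + ?T4")
proof -
  define c where "c = \<eta> * (2 * I - \<Lambda>) + \<eta>"
  define w where "w = v + \<eta>"
  define d where "d = \<mu> + \<eta> * (2 * I - \<Lambda>) - \<eta>"
  define z where "z = \<eta> * \<Lambda> + \<eta>"
  define e where "e = \<eta> * (2 * I - \<Lambda>) - \<eta>"
  define d2 where "d2 = \<mu> + \<eta> * (2 * I - \<Lambda>) + \<eta>"
  define D0 where "D0 = f (\<eta> * \<Lambda> - v)"
  define D1 where "D1 = f (\<eta> * \<Lambda> - (v + 2*\<eta>))"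
  define M where "M = f \<mu>"
  define Mm where "Mm = f (\<mu> - 2*\<eta>)"
  define Mp where "Mp = f (\<mu> + 2*\<eta>)"
  define F2 where "F2 = f (2 * \<eta>)"
  note defs = c_def w_def d_def z_def e_def d2_def
  have nz': "D0 \<noteq> 0" "D1 \<noteq> 0" "M \<noteq> 0" "Mm \<noteq> 0" "Mp \<noteq> 0" "F2 \<noteq> 0"
    using nz eta_nz by (simp_all add: D0_def D1_def M_def Mm_def Mp_def F2_def)
  have T1: "?T1 = - (br c w * br d z) / (D0 * Mm * D1 * M)"
  proof -
    have a1: "f (\<eta> * (2 * I - \<Lambda>) - v) = f (c - w)" by (rule argeq) (simp add: defs algebra_simps)
    have a2: "f ((\<mu> - 2*\<eta>) + 2 * \<eta> * (I - \<Lambda>)) = f (d - z)" by (rule argeq) (simp add: defs algebra_simps)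
    have a3: "f (\<eta> * (\<Lambda> - 2 * I) - (v + 2*\<eta>)) = - f (c + w)" by (rule argeq_neg) (simp add: defs algebra_simps)
    have a4: "f (\<mu> + 2 * I * \<eta>) = f (d + z)" by (rule argeq) (simp add: defs algebra_simps)
    show ?thesis unfolding a1 a2 a3 a4 pair[symmetric] D0_def[symmetric] D1_def[symmetric] M_def[symmetric] Mm_def[symmetric]
      using nz' by (simp add: field_simps)
  qed
  have T2: "?T2 = br d2 w * br z e / (D0 * Mp * D1 * M)"
  proof -
    have a1: "f ((\<mu> + 2*\<eta>) - v + \<eta> * (2 * I - 2 - \<Lambda>)) = f (d2 - w)" by (rule argeq) (simp add: defs algebra_simps)
    have a2: "f (2 * \<eta> * (\<Lambda> + 1 - I)) = f (z - e)" by (rule argeq) (simp add: defs algebra_simps)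
    have a3: "f (2 * I * \<eta>) = f (z + e)" by (rule argeq) (simp add: defs algebra_simps)
    have a4: "f ((v + 2*\<eta>) + \<mu> + \<eta> * (2 * (I - 1) + 2 - \<Lambda>)) = f (d2 + w)" by (rule argeq) (simp add: defs algebra_simps)
    show ?thesis unfolding a1 a2 a3 a4 pair[symmetric] D0_def[symmetric] D1_def[symmetric] M_def[symmetric] Mp_def[symmetric] F2_def[symmetric]
      using nz' by (simp add: field_simps)
  qed
  have T3: "?T3 = br d w * br z c / (D0 * Mm * D1 * M)"
  proof -
    have a1: "f (v + (\<mu> - 2*\<eta>) + \<eta> * (2 * I + 2 - \<Lambda>)) = f (d + w)" by (rule argeq) (simp add: defs algebra_simps)
    have a2: "f (\<mu> - (v + 2*\<eta>) + \<eta> * (2 * (I + 1) - 2 - \<Lambda>)) = f (d - w)" by (rule argeq) (simp add: defs algebra_simps)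
    have a3: "f (2 * \<eta> * (\<Lambda> + 1 - (I + 1))) = f (z - c)" by (rule argeq) (simp add: defs algebra_simps)
    have a4: "f (2 * (I + 1) * \<eta>) = f (z + c)" by (rule argeq) (simp add: defs algebra_simps)
    show ?thesis unfolding a1 a2 a3 a4 pair[symmetric] D0_def[symmetric] D1_def[symmetric] M_def[symmetric] Mm_def[symmetric] F2_def[symmetric]
      using nz' by (simp add: field_simps)
  qed
  have T4: "?T4 = - (br e w * br d2 z) / (D0 * Mp * D1 * M)"
  proof -
    have a1: "f (\<eta> * (\<Lambda> - 2 * I) - v) = - f (e + w)" by (rule argeq_neg) (simp add: defs algebra_simps)
    have a2: "f ((\<mu> + 2*\<eta>) + 2 * I * \<eta>) = f (d2 + z)" by (rule argeq) (simp add: defs algebra_simps)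
    have a3: "f (\<eta> * (2 * I - \<Lambda>) - (v + 2*\<eta>)) = f (e - w)" by (rule argeq) (simp add: defs algebra_simps)
    have a4: "f (\<mu> + 2 * \<eta> * (I - \<Lambda>)) = f (d2 - z)" by (rule argeq) (simp add: defs algebra_simps)
    show ?thesis unfolding a1 a2 a3 a4 pair[symmetric] D0_def[symmetric] D1_def[symmetric] M_def[symmetric] Mp_def[symmetric]
      using nz' by (simp add: field_simps)
  qed
  have pl1: "br c w * br d z + br d w * br z c = br c d * br w z"
    unfolding br_def by algebra
  have pl2: "br e w * br d2 z + br d2 w * br z e = br e d2 * br w z"
    unfolding br_def by algebra
  have bcd: "br c d = - f (c + d) * Mm"
  proof -
    have "f (c - d) = - Mm" unfolding Mm_def by (rule argeq_neg) (simp add: defs algebra_simps)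
    thus ?thesis using pair[of c d] by simp
  qed
  have bed: "br e d2 = - f (c + d) * Mp"
  proof -
    have "f (e - d2) = - Mp" unfolding Mp_def by (rule argeq_neg) (simp add: defs algebra_simps)
    moreover have "f (e + d2) = f (c + d)" by (rule argeq) (simp add: defs algebra_simps)
    ultimately show ?thesis using pair[of e d2] by simp
  qed
  have "?T1 - ?T3 = f (c + d) * br w z / (D0 * D1 * M)"
  proof -
    have "?T1 - ?T3 = - (br c w * br d z + br d w * br z c) / (D0 * Mm * D1 * M)"
      unfolding T1 T3 using nz' by (simp add: field_simps)
    also have "\<dots> = f (c + d) * br w z / (D0 * D1 * M)"
      unfolding pl1 bcd using nz' by (simp add: field_simps)
    finally show ?thesis .
  qed
  moreover have "?T4 - ?T2 = f (c + d) * br w z / (D0 * D1 * M)"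
  proof -
    have "?T4 - ?T2 = - (br e w * br d2 z + br d2 w * br z e) / (D0 * Mp * D1 * M)"
      unfolding T4 T2 using nz' by (simp add: field_simps)
    also have "\<dots> = f (c + d) * br w z / (D0 * D1 * M)"
      unfolding pl2 bed using nz' by (simp add: field_simps)
    finally show ?thesis .
  qed
  ultimately show ?thesis by (simp add: algebra_simps)
qed

lemma L0:
  assumes "gv v" "gl \<mu>"
  shows "W1 f \<eta> \<Lambda> i 0 (i-1) 1 v (\<mu>-2*\<eta>) * W1 f \<eta> \<Lambda> (i-1) 0 (i-1) 0 (v+2*\<eta>) \<mu>
       = W1 f \<eta> \<Lambda> i 0 i 0 v (\<mu>-2*\<eta>) * W1 f \<eta> \<Lambda> i 0 (i-1) 1 (v+2*\<eta>) \<mu>"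
proof (cases "i \<ge> 1")
  case False
  then show ?thesis by (cases "i < 0") (auto simp: W1_def)
next
  case True
  define I where "I = (of_int i :: complex)"
  have nz: "f (\<eta> * \<Lambda> - v) \<noteq> 0" "f (\<eta> * \<Lambda> - (v + 2*\<eta>)) \<noteq> 0" "f \<mu> \<noteq> 0"
     "f (\<mu> - 2*\<eta>) \<noteq> 0" "f (2*\<eta>) \<noteq> 0"
    using gv_nz[OF assms(1)] gl_nz[OF assms(2)] eta_nz by auto
  have e1: "W1 f \<eta> \<Lambda> i 0 (i-1) 1 v (\<mu>-2*\<eta>) = f ((\<mu>-2*\<eta>) - v + \<eta> * (2 * I - 2 - \<Lambda>)) * f (2 * \<eta> * (\<Lambda> + 1 - I)) * f (2 * I * \<eta>)
         / (f (\<eta> * \<Lambda> - v) * f (\<mu>-2*\<eta>) * f (2 * \<eta>))"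
    using W1_01[of i v "\<mu>-2*\<eta>"] True by (simp add: I_def)
  have e2: "W1 f \<eta> \<Lambda> (i-1) 0 (i-1) 0 (v+2*\<eta>) \<mu> = f (\<eta> * (\<Lambda> - 2 * (I-1)) - (v+2*\<eta>)) * f (\<mu> + 2 * (I-1) * \<eta>) / (f (\<eta> * \<Lambda> - (v+2*\<eta>)) * f \<mu>)"
    using W1_00[of "i-1" "v+2*\<eta>" \<mu>] True by (simp add: I_def)
  have e3: "W1 f \<eta> \<Lambda> i 0 i 0 v (\<mu>-2*\<eta>) = f (\<eta> * (\<Lambda> - 2 * I) - v) * f ((\<mu>-2*\<eta>) + 2 * I * \<eta>) / (f (\<eta> * \<Lambda> - v) * f (\<mu>-2*\<eta>))"
    using W1_00[of i v "\<mu>-2*\<eta>"] True by (simp add: I_def)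
  have e4: "W1 f \<eta> \<Lambda> i 0 (i-1) 1 (v+2*\<eta>) \<mu> = f (\<mu> - (v+2*\<eta>) + \<eta> * (2 * I - 2 - \<Lambda>)) * f (2 * \<eta> * (\<Lambda> + 1 - I)) * f (2 * I * \<eta>)
         / (f (\<eta> * \<Lambda> - (v+2*\<eta>)) * f \<mu> * f (2 * \<eta>))"
    using W1_01[of i "v+2*\<eta>" \<mu>] True by (simp add: I_def)
  have a1: "f (\<eta> * (\<Lambda> - 2 * (I-1)) - (v+2*\<eta>)) = f (\<eta> * (\<Lambda> - 2 * I) - v)" by (rule argeq) (simp add: algebra_simps)
  have a2: "f (\<mu> + 2 * (I-1) * \<eta>) = f ((\<mu>-2*\<eta>) + 2 * I * \<eta>)" by (rule argeq) (simp add: algebra_simps)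
  have a3: "f ((\<mu>-2*\<eta>) - v + \<eta> * (2 * I - 2 - \<Lambda>)) = f (\<mu> - (v+2*\<eta>) + \<eta> * (2 * I - 2 - \<Lambda>))" by (rule argeq) (simp add: algebra_simps)
  show ?thesis unfolding e1 e2 e3 e4 a1 a2 a3 using nz by (simp add: field_simps)
qed

lemma L2:
  assumes "gv v" "gl \<mu>"
  shows "W1 f \<eta> \<Lambda> i 1 i 1 v (\<mu>+2*\<eta>) * W1 f \<eta> \<Lambda> i 1 (i+1) 0 (v+2*\<eta>) \<mu>
       = W1 f \<eta> \<Lambda> i 1 (i+1) 0 v (\<mu>+2*\<eta>) * W1 f \<eta> \<Lambda> (i+1) 1 (i+1) 1 (v+2*\<eta>) \<mu>"
proof (cases "i \<ge> 0")
  case False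
  then show ?thesis by simp
next
  case True
  define I where "I = (of_int i :: complex)"
  have nz: "f (\<eta> * \<Lambda> - v) \<noteq> 0" "f (\<eta> * \<Lambda> - (v + 2*\<eta>)) \<noteq> 0" "f \<mu> \<noteq> 0"
     "f (\<mu> + 2*\<eta>) \<noteq> 0" "f (2*\<eta>) \<noteq> 0"
    using gv_nz[OF assms(1)] gl_nz[OF assms(2)] eta_nz by auto
  have e1: "W1 f \<eta> \<Lambda> i 1 i 1 v (\<mu>+2*\<eta>) = f (\<eta> * (2 * I - \<Lambda>) - v) * f ((\<mu>+2*\<eta>) + 2 * \<eta> * (I - \<Lambda>)) / (f (\<eta> * \<Lambda> - v) * f (\<mu>+2*\<eta>))"
    using W1_11[of i v "\<mu>+2*\<eta>"] True by (simp add: I_def)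
  have e2: "W1 f \<eta> \<Lambda> i 1 (i+1) 0 (v+2*\<eta>) \<mu> = f ((v+2*\<eta>) + \<mu> + \<eta> * (2 * I + 2 - \<Lambda>)) * f (2 * \<eta>) / (f (\<eta> * \<Lambda> - (v+2*\<eta>)) * f \<mu>)"
    using W1_10[of i "v+2*\<eta>" \<mu>] True by (simp add: I_def)
  have e3: "W1 f \<eta> \<Lambda> i 1 (i+1) 0 v (\<mu>+2*\<eta>) = f (v + (\<mu>+2*\<eta>) + \<eta> * (2 * I + 2 - \<Lambda>)) * f (2 * \<eta>) / (f (\<eta> * \<Lambda> - v) * f (\<mu>+2*\<eta>))"
    using W1_10[of i v "\<mu>+2*\<eta>"] True by (simp add: I_def)
  have e4: "W1 f \<eta> \<Lambda> (i+1) 1 (i+1) 1 (v+2*\<eta>) \<mu> = f (\<eta> * (2 * (I+1) - \<Lambda>) - (v+2*\<eta>)) * f (\<mu> + 2 * \<eta> * ((I+1) - \<Lambda>)) / (f (\<eta> * \<Lambda> - (v+2*\<eta>)) * f \<mu>)"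
    using W1_11[of "i+1" "v+2*\<eta>" \<mu>] True by (simp add: I_def)
  have a1: "f ((v+2*\<eta>) + \<mu> + \<eta> * (2 * I + 2 - \<Lambda>)) = f (v + (\<mu>+2*\<eta>) + \<eta> * (2 * I + 2 - \<Lambda>))" by (rule argeq) (simp add: algebra_simps)
  have a2: "f (\<eta> * (2 * (I+1) - \<Lambda>) - (v+2*\<eta>)) = f (\<eta> * (2 * I - \<Lambda>) - v)" by (rule argeq) (simp add: algebra_simps)
  have a3: "f (\<mu> + 2 * \<eta> * ((I+1) - \<Lambda>)) = f ((\<mu>+2*\<eta>) + 2 * \<eta> * (I - \<Lambda>))" by (rule argeq) (simp add: algebra_simps)
  show ?thesis unfolding e1 e2 e3 e4 a1 a2 a3 using nz by (simp add: field_simps)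
qed

lemma L1:
  assumes "gv v" "gl \<mu>"
  shows "W1 f \<eta> \<Lambda> i 1 i 1 v (\<mu>-2*\<eta>) * W1 f \<eta> \<Lambda> i 0 i 0 (v+2*\<eta>) \<mu>
       + W1 f \<eta> \<Lambda> i 0 (i-1) 1 v (\<mu>+2*\<eta>) * W1 f \<eta> \<Lambda> (i-1) 1 i 0 (v+2*\<eta>) \<mu>
       = W1 f \<eta> \<Lambda> i 1 (i+1) 0 v (\<mu>-2*\<eta>) * W1 f \<eta> \<Lambda> (i+1) 0 i 1 (v+2*\<eta>) \<mu>
       + W1 f \<eta> \<Lambda> i 0 i 0 v (\<mu>+2*\<eta>) * W1 f \<eta> \<Lambda> i 1 i 1 (v+2*\<eta>) \<mu>"
proof (cases "i \<ge> 0")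
  case False
  then show ?thesis by simp
next
  case True
  define I where "I = (of_int i :: complex)"
  have nz: "f (\<eta> * \<Lambda> - v) \<noteq> 0" "f (\<eta> * \<Lambda> - (v + 2*\<eta>)) \<noteq> 0" "f \<mu> \<noteq> 0"
     "f (\<mu> - 2*\<eta>) \<noteq> 0" "f (\<mu> + 2*\<eta>) \<noteq> 0"
    using gv_nz[OF assms(1)] gl_nz[OF assms(2)] by auto
  have e1: "W1 f \<eta> \<Lambda> i 1 i 1 v (\<mu>-2*\<eta>) = f (\<eta> * (2 * I - \<Lambda>) - v) * f ((\<mu> - 2*\<eta>) + 2 * \<eta> * (I - \<Lambda>)) / (f (\<eta> * \<Lambda> - v) * f (\<mu> - 2*\<eta>))"
    using W1_11[of i v "\<mu>-2*\<eta>"] True by (simp add: I_def)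
  have e2: "W1 f \<eta> \<Lambda> i 0 i 0 (v+2*\<eta>) \<mu> = f (\<eta> * (\<Lambda> - 2 * I) - (v + 2*\<eta>)) * f (\<mu> + 2 * I * \<eta>) / (f (\<eta> * \<Lambda> - (v + 2*\<eta>)) * f \<mu>)"
    using W1_00[of i "v+2*\<eta>" \<mu>] True by (simp add: I_def)
  have e3: "W1 f \<eta> \<Lambda> i 0 (i-1) 1 v (\<mu>+2*\<eta>) * W1 f \<eta> \<Lambda> (i-1) 1 i 0 (v+2*\<eta>) \<mu>
     = f ((\<mu> + 2*\<eta>) - v + \<eta> * (2 * I - 2 - \<Lambda>)) * f (2 * \<eta> * (\<Lambda> + 1 - I)) * f (2 * I * \<eta>) / (f (\<eta> * \<Lambda> - v) * f (\<mu> + 2*\<eta>) * f (2 * \<eta>))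
   * (f ((v + 2*\<eta>) + \<mu> + \<eta> * (2 * (I - 1) + 2 - \<Lambda>)) * f (2 * \<eta>) / (f (\<eta> * \<Lambda> - (v + 2*\<eta>)) * f \<mu>))"
  proof (cases "i = 0")
    case True
    then show ?thesis by (simp add: W1_def I_def)
  next
    case False
    with \<open>i \<ge> 0\<close> have "i - 1 \<ge> 0" by simp
    have x1: "W1 f \<eta> \<Lambda> i 0 (i-1) 1 v (\<mu>+2*\<eta>) = f ((\<mu> + 2*\<eta>) - v + \<eta> * (2 * I - 2 - \<Lambda>)) * f (2 * \<eta> * (\<Lambda> + 1 - I)) * f (2 * I * \<eta>) / (f (\<eta> * \<Lambda> - v) * f (\<mu> + 2*\<eta>) * f (2 * \<eta>))"
      using W1_01[of i v "\<mu>+2*\<eta>"] \<open>i \<ge> 0\<close> by (simp add: I_def)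
    have x2: "W1 f \<eta> \<Lambda> (i-1) 1 i 0 (v+2*\<eta>) \<mu> = f ((v + 2*\<eta>) + \<mu> + \<eta> * (2 * (I - 1) + 2 - \<Lambda>)) * f (2 * \<eta>) / (f (\<eta> * \<Lambda> - (v + 2*\<eta>)) * f \<mu>)"
      using W1_10[of "i-1" "v+2*\<eta>" \<mu>] \<open>i - 1 \<ge> 0\<close> by (simp add: I_def)
    show ?thesis unfolding x1 x2 ..
  qed
  have e4: "W1 f \<eta> \<Lambda> i 1 (i+1) 0 v (\<mu>-2*\<eta>) = f (v + (\<mu> - 2*\<eta>) + \<eta> * (2 * I + 2 - \<Lambda>)) * f (2 * \<eta>) / (f (\<eta> * \<Lambda> - v) * f (\<mu> - 2*\<eta>))"
    using W1_10[of i v "\<mu>-2*\<eta>"] True by (simp add: I_def)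
  have e5: "W1 f \<eta> \<Lambda> (i+1) 0 i 1 (v+2*\<eta>) \<mu> = f (\<mu> - (v + 2*\<eta>) + \<eta> * (2 * (I + 1) - 2 - \<Lambda>)) * f (2 * \<eta> * (\<Lambda> + 1 - (I + 1))) * f (2 * (I + 1) * \<eta>) / (f (\<eta> * \<Lambda> - (v + 2*\<eta>)) * f \<mu> * f (2 * \<eta>))"
    using W1_01[of "i+1" "v+2*\<eta>" \<mu>] True by (simp add: I_def)
  have e6: "W1 f \<eta> \<Lambda> i 0 i 0 v (\<mu>+2*\<eta>) = f (\<eta> * (\<Lambda> - 2 * I) - v) * f ((\<mu> + 2*\<eta>) + 2 * I * \<eta>) / (f (\<eta> * \<Lambda> - v) * f (\<mu> + 2*\<eta>))"
    using W1_00[of i v "\<mu>+2*\<eta>"] True by (simp add: I_def)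
  have e7: "W1 f \<eta> \<Lambda> i 1 i 1 (v+2*\<eta>) \<mu> = f (\<eta> * (2 * I - \<Lambda>) - (v + 2*\<eta>)) * f (\<mu> + 2 * \<eta> * (I - \<Lambda>)) / (f (\<eta> * \<Lambda> - (v + 2*\<eta>)) * f \<mu>)"
    using W1_11[of i "v+2*\<eta>" \<mu>] True by (simp add: I_def)
  show ?thesis unfolding e1 e2 e3 e4 e5 e6 e7 by (rule L1F[OF nz])
qed

lemma swap_head:
  assumes gv: "gv v" and gl: "gl lam"
  shows "S i j i2 (1#0#cs) v lam = S i j i2 (0#1#cs) v lam"
proof -
  define n where "n = length cs"
  define \<mu>0 where "\<mu>0 = lam - 2*\<eta> * of_int (int n - 2*j)"
  define \<mu>1 where "\<mu>1 = lam - 2*\<eta> * of_int (int n - 2*(j-1))"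
  define \<mu>2 where "\<mu>2 = lam - 2*\<eta> * of_int (int n - 2*(j-2))"
  define R0 where "R0 = S (i-1) j i2 cs (v+2*\<eta>+2*\<eta>) lam"
  define R1 where "R1 = S i (j-1) i2 cs (v+2*\<eta>+2*\<eta>) lam"
  define R2 where "R2 = S (i+1) (j-2) i2 cs (v+2*\<eta>+2*\<eta>) lam"
  have glm: "gl \<mu>0" "gl \<mu>1" "gl \<mu>2"
  proof -
    have "\<mu>0 = lam + 2*\<eta> * of_int (2*j - int n)" unfolding \<mu>0_def by (simp add: algebra_simps)
    note e=this show "gl \<mu>0" unfolding e by (rule gl_shift[OF gl])
    have "\<mu>1 = lam + 2*\<eta> * of_int (2*(j-1) - int n)" unfolding \<mu>1_def by (simp add: algebra_simps)
    note e=this show "gl \<mu>1" unfolding e by (rule gl_shift[OF gl])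
    have "\<mu>2 = lam + 2*\<eta> * of_int (2*(j-2) - int n)" unfolding \<mu>2_def by (simp add: algebra_simps)
    note e=this show "gl \<mu>2" unfolding e by (rule gl_shift[OF gl])
  qed
  have lhs: "S i j i2 (1#0#cs) v lam =
      W1 f \<eta> \<Lambda> i 0 (i-1) 1 v (\<mu>0-2*\<eta>) * W1 f \<eta> \<Lambda> (i-1) 0 (i-1) 0 (v+2*\<eta>) \<mu>0 * R0
    + (W1 f \<eta> \<Lambda> i 1 i 1 v (\<mu>1-2*\<eta>) * W1 f \<eta> \<Lambda> i 0 i 0 (v+2*\<eta>) \<mu>1
       + W1 f \<eta> \<Lambda> i 0 (i-1) 1 v (\<mu>1+2*\<eta>) * W1 f \<eta> \<Lambda> (i-1) 1 i 0 (v+2*\<eta>) \<mu>1) * R1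
    + W1 f \<eta> \<Lambda> i 1 i 1 v (\<mu>2+2*\<eta>) * W1 f \<eta> \<Lambda> i 1 (i+1) 0 (v+2*\<eta>) \<mu>2 * R2"
    by (simp add: S_Cons \<mu>0_def \<mu>1_def \<mu>2_def R0_def R1_def R2_def n_def algebra_simps)
  have rhs: "S i j i2 (0#1#cs) v lam =
      W1 f \<eta> \<Lambda> i 0 i 0 v (\<mu>0-2*\<eta>) * W1 f \<eta> \<Lambda> i 0 (i-1) 1 (v+2*\<eta>) \<mu>0 * R0
    + (W1 f \<eta> \<Lambda> i 1 (i+1) 0 v (\<mu>1-2*\<eta>) * W1 f \<eta> \<Lambda> (i+1) 0 i 1 (v+2*\<eta>) \<mu>1
       + W1 f \<eta> \<Lambda> i 0 i 0 v (\<mu>1+2*\<eta>) * W1 f \<eta> \<Lambda> i 1 i 1 (v+2*\<eta>) \<mu>1) * R1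
    + W1 f \<eta> \<Lambda> i 1 (i+1) 0 v (\<mu>2+2*\<eta>) * W1 f \<eta> \<Lambda> (i+1) 1 (i+1) 1 (v+2*\<eta>) \<mu>2 * R2"
    by (simp add: S_Cons \<mu>0_def \<mu>1_def \<mu>2_def R0_def R1_def R2_def n_def algebra_simps)
  show ?thesis
    unfolding lhs rhs L0[OF gv glm(1)] L1[OF gv glm(2)] L2[OF gv glm(3)] ..
qed

lemma S_cong_Cons:
  assumes "\<And>i j i2 v. gv v \<Longrightarrow> S i j i2 X v lam = S i j i2 Y v lam" "length X = length Y" "gv v"
  shows "S i j i2 (c#X) v lam = S i j i2 (c#Y) v lam"
  using assms(1)[OF gv_shift2[OF assms(3)]] assms(2) by (simp add: S_Cons)

lemma move0:
  assumes "gl lam"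
  shows "gv v \<Longrightarrow> S i j i2 (0 # replicate p 1 @ Z) v lam = S i j i2 (replicate p 1 @ 0 # Z) v lam"
proof (induction p arbitrary: i j i2 v)
  case 0
  then show ?case by simp
next
  case (Suc p)
  have "S i j i2 (0 # replicate (Suc p) 1 @ Z) v lam = S i j i2 (1 # 0 # (replicate p 1 @ Z)) v lam"
    using swap_head[OF Suc.prems assms, of i j i2 "replicate p 1 @ Z"] by simp
  also have "\<dots> = S i j i2 (1 # (replicate p 1 @ 0 # Z)) v lam"
    by (rule S_cong_Cons[OF _ _ Suc.prems]) (use Suc.IH in auto)
  finally show ?case by simp
qed

lemma sum01: "set xs \<subseteq> {0,1::int} \<Longrightarrow> 0 \<le> sum_list xs \<and> sum_list xs \<le> int (length xs)"
  by (induction xs) auto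

lemma S_NF:
  assumes "gl lam"
  shows "set K \<subseteq> {0,1} \<Longrightarrow> gv v \<Longrightarrow>
    S i j i2 K v lam = S i j i2 (replicate (nat (sum_list K)) 1 @ replicate (length K - nat (sum_list K)) 0) v lam"
proof (induction K arbitrary: i j i2 v)
  case Nil
  then show ?case by simp
next
  case (Cons c cs)
  define p where "p = nat (sum_list cs)"
  define q where "q = length cs - p"
  have sc: "0 \<le> sum_list cs" "sum_list cs \<le> int (length cs)" using sum01[of cs] Cons.prems by auto
  have step: "S i j i2 (c#cs) v lam = S i j i2 (c # (replicate p 1 @ replicate q 0)) v lam"
    by (rule S_cong_Cons[OF _ _ Cons.prems(2)]) (use Cons.IH Cons.prems(1) sc in \<open>auto simp: p_def q_def\<close>)
  have "c = 0 \<or> c = 1" using Cons.prems(1) by auto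
  then show ?case
  proof
    assume c: "c = 1"
    have "nat (sum_list (c#cs)) = Suc p" "length (c#cs) - Suc p = q" using sc c by (auto simp: p_def q_def)
    then show ?thesis unfolding step using c by simp
  next
    assume c: "c = 0"
    have e: "nat (sum_list (c#cs)) = p" "length (c#cs) - p = Suc q" using sc c by (auto simp: p_def q_def)
    show ?thesis unfolding step unfolding e unfolding c using move0[OF assms Cons.prems(2), of i j i2 p "replicate q 0"] by simp
  qed
qed

lemma Wfused_S: "Wfused f \<eta> \<Lambda> n i j i2 jj v lam =
   (if jj < 0 \<or> jj > int n then 0 else S i j i2 (replicate (nat jj) 1 @ replicate (n - nat jj) 0) v lam)"
  unfolding Wfused_def
  by (auto simp: WfusedK_S S_neg_start S_neg_end S_neg_j)

lemma main_abs:
  fixes J i1 j1 i2 j2 :: nat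
  assumes gv: "gv v" and gl: "gl lam" and j2_le: "j2 \<le> J" and K: "K \<in> bits J (int j2)"
  shows "WfusedK f \<eta> \<Lambda> J (int i1) (int j1) (int i2) K v lam =
    (\<Sum>k=0..J.
       Wfused f \<eta> \<Lambda> j2 (int i1) (int k) (int i1 + int k - int j2) (int j2) v
          (lam - 2 * \<eta> * (of_nat J - 2 * of_nat j1 - of_nat j2 + 2 * of_nat k))
     * Wfused f \<eta> \<Lambda> (J - j2) (int i1 + int k - int j2) (int j1 - int k) (int i2) 0
          (v + 2 * \<eta> * of_nat j2) lam)"
proof -
  have lenK: "length K = J" and setK: "set K \<subseteq> {0,1}" and sumK: "sum_list K = int j2"
    using K by (auto simp: bits_def)
  have "WfusedK f \<eta> \<Lambda> J (int i1) (int j1) (int i2) K v lam = S (int i1) (int j1) (int i2) K v lam"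
    by (rule WfusedK_S[OF lenK])
  also have "\<dots> = S (int i1) (int j1) (int i2) (replicate j2 1 @ replicate (J - j2) 0) v lam"
    using S_NF[OF gl setK gv] lenK sumK by simp
  also have "\<dots> = (\<Sum>k=0..J. S (int i1) (int k) (int i1 + int k - int j2) (replicate j2 1) v
          (lam - 2*\<eta> * of_int (int (J - j2) - 2*(int j1 - int k)))
        * S (int i1 + int k - int j2) (int j1 - int k) (int i2) (replicate (J - j2) 0) (v + 2*\<eta> * of_nat j2) lam)"
    using S_split[of "replicate j2 1" J "int i1" "int j1" "int i2" "replicate (J - j2) 0" v lam] j2_le
    by (simp add: sum_list_replicate)
  also have "\<dots> = (\<Sum>k=0..J.
       Wfused f \<eta> \<Lambda> j2 (int i1) (int k) (int i1 + int k - int j2) (int j2) v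
          (lam - 2 * \<eta> * (of_nat J - 2 * of_nat j1 - of_nat j2 + 2 * of_nat k))
     * Wfused f \<eta> \<Lambda> (J - j2) (int i1 + int k - int j2) (int j1 - int k) (int i2) 0
          (v + 2 * \<eta> * of_nat j2) lam)"
    by (rule sum.cong[OF refl]) (use j2_le in \<open>auto simp: Wfused_S of_nat_diff algebra_simps\<close>)
  finally show ?thesis .
qed

end

lemma exp_abs_int_summable: "(\<lambda>j::int. exp (- \<bar>real_of_int j\<bar>)) summable_on UNIV"
proof -
  have U: "(UNIV::int set) = range int \<union> range (\<lambda>n. - int (Suc n))"
  proof -
    have "x \<in> range int \<union> range (\<lambda>n. - int (Suc n))" for x :: int
    proof (cases "x \<ge> 0")
      case True then show ?thesis by (metis UnI1 nonneg_int_cases rangeI)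
    next
      case False
      then have "x = - int (Suc (nat (- x - 1)))" by simp
      then show ?thesis by blast
    qed
    thus ?thesis by blast
  qed
  have g: "summable (\<lambda>n::nat. exp (-1::real) ^ n)" by (rule summable_geometric) simp
  have s1: "(\<lambda>n::nat. exp (- \<bar>real_of_int (int n)\<bar>)) summable_on UNIV"
  proof -
    have "(\<lambda>n::nat. exp (- \<bar>real_of_int (int n)\<bar>)) = (\<lambda>n. exp (-1::real) ^ n)"
      by (auto simp: exp_of_nat_mult[symmetric])
    thus ?thesis using g by (simp add: summable_on_UNIV_nonneg_real_iff)
  qed
  have s2: "(\<lambda>n::nat. exp (- \<bar>real_of_int (- int (Suc n))\<bar>)) summable_on UNIV"
  proof -
    have "(\<lambda>n::nat. exp (- \<bar>real_of_int (- int (Suc n))\<bar>)) = (\<lambda>n. exp (-1) * exp (-1::real) ^ n)"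
      by (auto simp: exp_of_nat_mult[symmetric] exp_add[symmetric] algebra_simps)
    thus ?thesis using summable_mult[OF g, of "exp (-1)"] by (simp add: summable_on_UNIV_nonneg_real_iff)
  qed
  have i1: "inj (int)" by (simp add: inj_def)
  have i2: "inj (\<lambda>n. - int (Suc n))" by (simp add: inj_def)
  have a: "(\<lambda>j::int. exp (- \<bar>real_of_int j\<bar>)) summable_on range int"
    using s1 by (subst summable_on_reindex[OF i1]) (simp add: o_def)
  have b: "(\<lambda>j::int. exp (- \<bar>real_of_int j\<bar>)) summable_on range (\<lambda>n. - int (Suc n))"
    using s2 by (subst summable_on_reindex[OF i2]) (simp add: o_def)
  have "range int \<inter> range (\<lambda>n. - int (Suc n)) = {}" by auto
  from summable_on_Un_disjoint[OF a b this] show ?thesis by (subst U)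
qed

lemma gauss_summable:
  fixes c b :: real assumes c: "c > 0"
  shows "(\<lambda>j::int. exp (- c * (real_of_int j)^2 + b * real_of_int j)) summable_on UNIV"
proof (rule summable_on_comparison_test)
  define B where "B = \<bar>b\<bar> + 1"
  define M where "M = B^2 / (4*c)"
  show "(\<lambda>j::int. exp M * exp (- \<bar>real_of_int j\<bar>)) summable_on UNIV"
    using exp_abs_int_summable by (rule summable_on_cmult_right)
  fix j :: int
  show "0 \<le> exp (- c * (real_of_int j)^2 + b * real_of_int j)" by simp
  define t where "t = \<bar>real_of_int j\<bar>"
  have "0 \<le> c * (t - B/(2*c))^2" using c by simp
  also have "c * (t - B/(2*c))^2 = c * t^2 - B * t + M"
    using c unfolding M_def by (simp add: power2_eq_square field_simps)
  finally have q: "B * t - c * t^2 \<le> M" by simp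
  have "b * real_of_int j \<le> \<bar>b\<bar> * t" unfolding t_def by (metis abs_ge_self abs_mult)
  moreover have "t^2 = (real_of_int j)^2" unfolding t_def by simp
  ultimately have "- c * (real_of_int j)^2 + b * real_of_int j \<le> M + - t"
    using q unfolding B_def by (simp add: algebra_simps)
  thus "exp (- c * (real_of_int j)^2 + b * real_of_int j) \<le> exp M * exp (- \<bar>real_of_int j\<bar>)"
    by (simp add: t_def exp_add[symmetric])
qed

lemma gauss_abs:
  fixes A B C :: complex assumes "Re A < 0"
  shows "(\<lambda>j::int. norm (exp (A * (of_int j)^2 + B * of_int j + C))) summable_on UNIV"
proof -
  have n: "norm (exp (A * (of_int j)^2 + B * of_int j + C)) = exp (Re C) * exp (- (- Re A) * (real_of_int j)^2 + Re B * real_of_int j)" for j :: int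
  proof -
    have "Re (A * (of_int j)^2 + B * of_int j + C) = Re A * (real_of_int j)^2 + Re B * real_of_int j + Re C"
      by (simp add: power2_eq_square)
    thus ?thesis by (simp add: norm_exp_eq_Re exp_add[symmetric] algebra_simps)
  qed
  show ?thesis unfolding n
    by (rule summable_on_cmult_right) (rule gauss_summable, use assms in simp)
qed

lemma prod_summable:
  fixes g h :: "int \<Rightarrow> complex"
  assumes g: "(\<lambda>j. norm (g j)) summable_on UNIV" and h: "(\<lambda>j. norm (h j)) summable_on UNIV"
  shows "(\<lambda>(j,k). g j * h k) summable_on (UNIV \<times> UNIV)"
proof -
  have "(\<lambda>x. norm ((\<lambda>(j,k). g j * h k) x)) summable_on Sigma UNIV (\<lambda>_. UNIV)"
  proof (subst Infinite_Sum.abs_summable_on_Sigma_iff, intro conjI ballI)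
    fix j :: int
    show "(\<lambda>k. norm ((\<lambda>(j,k). g j * h k) (j,k))) summable_on UNIV"
      using summable_on_cmult_right[OF h, of "norm (g j)"] by (simp add: norm_mult)
  next
    have "(\<lambda>j. norm (infsum (\<lambda>k. norm ((\<lambda>(j,k). g j * h k) (j,k))) UNIV))
        = (\<lambda>j. norm (g j) * norm (infsum (\<lambda>k. norm (h k)) UNIV))"
      by (simp add: norm_mult infsum_cmult_right' abs_mult)
    then show "(\<lambda>j. norm (infsum (\<lambda>k. norm ((\<lambda>(j,k). g j * h k) (j,k))) UNIV)) summable_on UNIV"
      using summable_on_cmult_left[OF g] by simp
  qed
  thus ?thesis using summable_on_iff_abs_summable_on_complex by auto
qed

lemma prod_infsum:
  fixes g h :: "int \<Rightarrow> complex"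
  assumes g: "(\<lambda>j. norm (g j)) summable_on UNIV" and h: "(\<lambda>j. norm (h j)) summable_on UNIV"
  shows "infsum g UNIV * infsum h UNIV = infsum (\<lambda>(j,k). g j * h k) (UNIV \<times> UNIV)"
proof -
  have "infsum (\<lambda>j. infsum (\<lambda>k. g j * h k) UNIV) UNIV = infsum (\<lambda>(j,k). g j * h k) (Sigma UNIV (\<lambda>_. UNIV))"
    by (rule infsum_Sigma'_banach) (use prod_summable[OF g h] in simp)
  moreover have "infsum (\<lambda>j. infsum (\<lambda>k. g j * h k) UNIV) UNIV = infsum g UNIV * infsum h UNIV"
    by (simp add: infsum_cmult_right' infsum_cmult_left')
  ultimately show ?thesis by simp
qed

definition tt :: "complex \<Rightarrow> complex \<Rightarrow> int \<Rightarrow> complex" where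
  "tt \<tau> z j = exp (pi * \<i> * \<tau> * (of_int j + 1/2)^2 + 2 * pi * \<i> * (of_int j + 1/2) * (z + 1/2))"

lemma theta_tt: "theta_fn \<tau> z = - infsum (tt \<tau> z) UNIV"
  unfolding theta_fn_def tt_def by simp

lemma exp_shift_pi: "exp (w + \<i> * pi) = - exp w"
  by (simp add: exp_add exp_pi_i')

lemma tt_odd: "tt \<tau> (-z) (-1-j) = - tt \<tau> z j"
proof -
  define E0 where "E0 = pi * \<i> * \<tau> * (of_int j + 1/2)^2 + 2 * pi * \<i> * (of_int j + 1/2) * (z + 1/2)"
  have "pi * \<i> * \<tau> * (of_int (-1-j) + 1/2)^2 + 2 * pi * \<i> * (of_int (-1-j) + 1/2) * (-z + 1/2)
      = (E0 + \<i> * pi) + \<i> * (of_int (-j-1) * (of_real pi * 2))"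
    unfolding E0_def by (simp add: field_simps power2_eq_square)
  hence "tt \<tau> (-z) (-1-j) = exp (E0 + \<i> * pi)" unfolding tt_def by (simp only: exp_plus_2pin)
  thus ?thesis by (simp add: exp_shift_pi tt_def E0_def)
qed

lemma theta_odd: "theta_fn \<tau> (-z) = - theta_fn \<tau> z"
proof -
  have b: "bij_betw (\<lambda>j::int. -1-j) UNIV UNIV"
    by (rule bij_betwI[where g="\<lambda>j. -1-j"]) auto
  have "infsum (tt \<tau> (-z)) UNIV = infsum (\<lambda>j. tt \<tau> (-z) (-1-j)) UNIV"
    using infsum_reindex_bij_betw[OF b, of "tt \<tau> (-z)"] by simp
  also have "\<dots> = - infsum (tt \<tau> z) UNIV" by (simp add: tt_odd infsum_uminus)
  finally show ?thesis unfolding theta_tt by simp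
qed

definition Et :: "complex \<Rightarrow> complex \<Rightarrow> int \<Rightarrow> complex" where
  "Et \<tau> x p = exp (2 * pi * \<i> * (\<tau> * (of_int p)^2 + 2 * of_int p * x))"
definition Ot :: "complex \<Rightarrow> complex \<Rightarrow> int \<Rightarrow> complex" where
  "Ot \<tau> x p = exp (2 * pi * \<i> * (\<tau> * (2 * of_int p + 1)^2 / 4 + (2 * of_int p + 1) * x))"


lemma norm_exp_cong: "a = b \<Longrightarrow> norm (exp a) = norm (exp b)" by simp
lemma tt_summable: "Im \<tau> > 0 \<Longrightarrow> (\<lambda>j. norm (tt \<tau> z j)) summable_on UNIV"
proof -
  assume t: "Im \<tau> > 0"
  have eq: "(\<lambda>j. norm (tt \<tau> z j)) = (\<lambda>j::int. norm (exp ((pi * \<i> * \<tau>) * (of_int j)^2 + (pi * \<i> * \<tau> + 2 * pi * \<i> * (z + 1/2)) * of_int j + (pi * \<i> * \<tau> / 4 + pi * \<i> * (z + 1/2)))))"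
    unfolding tt_def by (intro ext norm_exp_cong) (simp add: algebra_simps power2_eq_square)
  show ?thesis unfolding eq by (rule gauss_abs) (use t in simp)
qed

lemma Et_summable: "Im \<tau> > 0 \<Longrightarrow> (\<lambda>j. norm (Et \<tau> z j)) summable_on UNIV"
proof -
  assume t: "Im \<tau> > 0"
  have eq: "(\<lambda>j. norm (Et \<tau> z j)) = (\<lambda>j::int. norm (exp ((2 * pi * \<i> * \<tau>) * (of_int j)^2 + (4 * pi * \<i> * z) * of_int j + 0)))"
    unfolding Et_def by (intro ext norm_exp_cong) (simp add: algebra_simps power2_eq_square)
  show ?thesis unfolding eq by (rule gauss_abs) (use t in simp)
qed

lemma Ot_summable: "Im \<tau> > 0 \<Longrightarrow> (\<lambda>j. norm (Ot \<tau> z j)) summable_on UNIV"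
proof -
  assume t: "Im \<tau> > 0"
  have eq: "(\<lambda>j. norm (Ot \<tau> z j)) = (\<lambda>j::int. norm (exp ((2 * pi * \<i> * \<tau>) * (of_int j)^2 + (2 * pi * \<i> * \<tau> + 4 * pi * \<i> * z) * of_int j + (2 * pi * \<i> * \<tau> / 4 + 2 * pi * \<i> * z))))"
    unfolding Ot_def by (intro ext norm_exp_cong) (simp add: algebra_simps power2_eq_square)
  show ?thesis unfolding eq by (rule gauss_abs) (use t in simp)
qed


lemma tt_prod1: "tt \<tau> (x+y) (p+q) * tt \<tau> (x-y) (p-q-1) = Et \<tau> x p * Ot \<tau> y q"
proof -
  have "pi * \<i> * \<tau> * (of_int (p+q) + 1/2)^2 + 2 * pi * \<i> * (of_int (p+q) + 1/2) * ((x+y) + 1/2)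
      + (pi * \<i> * \<tau> * (of_int (p-q-1) + 1/2)^2 + 2 * pi * \<i> * (of_int (p-q-1) + 1/2) * ((x-y) + 1/2))
      = (2 * pi * \<i> * (\<tau> * (of_int p)^2 + 2 * of_int p * x) + 2 * pi * \<i> * (\<tau> * (2 * of_int q + 1)^2 / 4 + (2 * of_int q + 1) * y))
        + \<i> * (of_int p * (of_real pi * 2))"
    by (simp add: algebra_simps power2_eq_square)
  thus ?thesis unfolding tt_def Et_def Ot_def exp_add[symmetric] by (simp only: exp_plus_2pin)
qed

lemma tt_prod2: "tt \<tau> (x+y) (p+q) * tt \<tau> (x-y) (p-q) = - (Ot \<tau> x p * Et \<tau> y q)"
proof -
  have "pi * \<i> * \<tau> * (of_int (p+q) + 1/2)^2 + 2 * pi * \<i> * (of_int (p+q) + 1/2) * ((x+y) + 1/2)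
      + (pi * \<i> * \<tau> * (of_int (p-q) + 1/2)^2 + 2 * pi * \<i> * (of_int (p-q) + 1/2) * ((x-y) + 1/2))
      = ((2 * pi * \<i> * (\<tau> * (2 * of_int p + 1)^2 / 4 + (2 * of_int p + 1) * x) + 2 * pi * \<i> * (\<tau> * (of_int q)^2 + 2 * of_int q * y))
        + \<i> * pi) + \<i> * (of_int p * (of_real pi * 2))"
    by (simp add: algebra_simps power2_eq_square)
  hence "tt \<tau> (x+y) (p+q) * tt \<tau> (x-y) (p-q) = exp ((2 * pi * \<i> * (\<tau> * (2 * of_int p + 1)^2 / 4 + (2 * of_int p + 1) * x) + 2 * pi * \<i> * (\<tau> * (of_int q)^2 + 2 * of_int q * y))
        + \<i> * pi)"
    unfolding tt_def exp_add[symmetric] by (simp only: exp_plus_2pin)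
  thus ?thesis unfolding exp_shift_pi Ot_def Et_def exp_add by simp
qed


lemma theta_prod:
  assumes t: "Im \<tau> > 0"
  shows "theta_fn \<tau> (x+y) * theta_fn \<tau> (x-y) =
     infsum (Et \<tau> x) UNIV * infsum (Ot \<tau> y) UNIV - infsum (Ot \<tau> x) UNIV * infsum (Et \<tau> y) UNIV"
proof -
  define F where "F = (\<lambda>(j,k). tt \<tau> (x+y) j * tt \<tau> (x-y) k)"
  define \<phi>1 where "\<phi>1 = (\<lambda>(p::int,q::int). (p+q, p-q-1))"
  define \<phi>2 where "\<phi>2 = (\<lambda>(p::int,q::int). (p+q, p-q))"
  have U: "(UNIV::(int\<times>int) set) = range \<phi>1 \<union> range \<phi>2"
  proof -
    have "(j,k) \<in> range \<phi>1 \<union> range \<phi>2" for j k :: int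
    proof -
      have "\<exists>p q. (j = p+q \<and> k = p-q-1) \<or> (j = p+q \<and> k = p-q)" by presburger
      then obtain p q where "(j = p+q \<and> k = p-q-1) \<or> (j = p+q \<and> k = p-q)" by blast
      hence "(j,k) = \<phi>1 (p,q) \<or> (j,k) = \<phi>2 (p,q)" unfolding \<phi>1_def \<phi>2_def by auto
      thus ?thesis by blast
    qed
    thus ?thesis by auto
  qed
  have disj: "range \<phi>1 \<inter> range \<phi>2 = {}"
  proof -
    have "\<not> (p+q = p'+q' \<and> p-q-1 = p'-q')" for p q p' q' :: int by presburger
    thus ?thesis unfolding \<phi>1_def \<phi>2_def by auto
  qed
  have inj1: "inj \<phi>1" unfolding \<phi>1_def inj_def by auto
  have inj2: "inj \<phi>2" unfolding \<phi>2_def inj_def by auto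
  have sF: "F summable_on UNIV"
    using prod_summable[OF tt_summable[OF t] tt_summable[OF t]] unfolding F_def by simp
  have "theta_fn \<tau> (x+y) * theta_fn \<tau> (x-y) = infsum F UNIV"
    unfolding theta_tt F_def using prod_infsum[OF tt_summable[OF t] tt_summable[OF t]] by simp
  also have "\<dots> = infsum F (range \<phi>1 \<union> range \<phi>2)"
    by (simp only: U[symmetric])
  also have "\<dots> = infsum F (range \<phi>1) + infsum F (range \<phi>2)"
    by (rule infsum_Un_disjoint[OF summable_on_subset_banach[OF sF] summable_on_subset_banach[OF sF] disj]) auto
  also have "infsum F (range \<phi>1) = infsum (\<lambda>(p,q). Et \<tau> x p * Ot \<tau> y q) (UNIV \<times> UNIV)"
  proof -
    have "infsum F (range \<phi>1) = infsum (F \<circ> \<phi>1) UNIV" by (rule infsum_reindex[OF inj1])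
    also have "F \<circ> \<phi>1 = (\<lambda>(p,q). Et \<tau> x p * Ot \<tau> y q)"
      unfolding F_def \<phi>1_def by (auto simp: tt_prod1)
    finally show ?thesis by simp
  qed
  also have "\<dots> = infsum (Et \<tau> x) UNIV * infsum (Ot \<tau> y) UNIV"
    by (rule prod_infsum[OF Et_summable[OF t] Ot_summable[OF t], symmetric])
  also have "infsum F (range \<phi>2) = - infsum (\<lambda>(p,q). Ot \<tau> x p * Et \<tau> y q) (UNIV \<times> UNIV)"
  proof -
    have "infsum F (range \<phi>2) = infsum (F \<circ> \<phi>2) UNIV" by (rule infsum_reindex[OF inj2])
    also have "F \<circ> \<phi>2 = (\<lambda>w. - (\<lambda>(p,q). Ot \<tau> x p * Et \<tau> y q) w)"
      unfolding F_def \<phi>2_def by (auto simp: tt_prod2)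
    finally show ?thesis by (simp add: infsum_uminus)
  qed
  also have "infsum (\<lambda>(p,q). Ot \<tau> x p * Et \<tau> y q) (UNIV \<times> UNIV) = infsum (Ot \<tau> x) UNIV * infsum (Et \<tau> y) UNIV"
    by (rule prod_infsum[OF Ot_summable[OF t] Et_summable[OF t], symmetric])
  finally show ?thesis by simp
qed


lemma sin_prod: "sin_fn (x+y) * sin_fn (x-y) = (sin_fn x)^2 * 1 - 1 * (sin_fn y)^2"
proof -
  define a where "a = of_real pi * x"
  define b where "b = of_real pi * y"
  have e: "sin_fn (x+y) = sin (a + b)" "sin_fn (x-y) = sin (a - b)" "sin_fn x = sin a" "sin_fn y = sin b"
    unfolding sin_fn_def a_def b_def by (simp_all add: distrib_left right_diff_distrib)
  have h1: "sin a ^ 2 + cos a ^ 2 = 1" and h2: "sin b ^ 2 + cos b ^ 2 = 1" by (simp_all add: sin_cos_squared_add)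
  show ?thesis unfolding e sin_add sin_diff using h1 h2 by algebra
qed

lemma sin_odd: "sin_fn (- x) = - sin_fn x"
  by (simp add: sin_fn_def)

lemma f_props:
  assumes tau: "Im \<tau> > 0" and f_choice: "f = theta_fn \<tau> \<or> f = sin_fn"
  shows "\<exists>Ee Oo. (\<forall>x. f (- x) = - f x) \<and> (\<forall>x y. f (x + y) * f (x - y) = Ee x * Oo y - Oo x * Ee y)"
  using f_choice
proof
  assume f: "f = theta_fn \<tau>"
  show ?thesis
    by (rule exI[where x="\<lambda>x. infsum (Et \<tau> x) UNIV"], rule exI[where x="\<lambda>x. infsum (Ot \<tau> x) UNIV"])
       (simp add: f theta_odd theta_prod[OF tau])
next
  assume f: "f = sin_fn"
  show ?thesis
    by (rule exI[where x="\<lambda>x. (sin_fn x)^2"], rule exI[where x="\<lambda>x. 1"])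
       (simp add: f sin_prod sin_odd)
qed

theorem lemma4p2:
  fixes f :: "complex \<Rightarrow> complex" and \<eta> \<tau> \<Lambda> v lam :: complex
    and J i1 j1 i2 j2 :: nat and K :: "int list"
  assumes tau: "Im \<tau> > 0"
    and f_choice: "f = theta_fn \<tau> \<or> f = sin_fn"
    and generic_eta: "f (2 * \<eta>) \<noteq> 0"
    and generic_v: "\<forall>m::int. f (\<eta> * \<Lambda> - v - 2 * \<eta> * of_int m) \<noteq> 0"
    and generic_lambda: "\<forall>m::int. f (lam + 2 * \<eta> * of_int m) \<noteq> 0"
    and J_pos: "J > 0"
    and j2_le: "j2 \<le> J"
    and K: "K \<in> bits J (int j2)"
  shows "WfusedK f \<eta> \<Lambda> J (int i1) (int j1) (int i2) K v lam =
    (\<Sum>k=0..J.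
       Wfused f \<eta> \<Lambda> j2 (int i1) (int k) (int i1 + int k - int j2) (int j2) v
          (lam - 2 * \<eta> * (of_nat J - 2 * of_nat j1 - of_nat j2 + 2 * of_nat k))
     * Wfused f \<eta> \<Lambda> (J - j2) (int i1 + int k - int j2) (int j1 - int k) (int i2) 0
          (v + 2 * \<eta> * of_nat j2) lam)"
proof -
  obtain Ee Oo where odd: "\<And>x. f (- x) = - f x" and pr: "\<And>x y. f (x + y) * f (x - y) = Ee x * Oo y - Oo x * Ee y"
    using f_props[OF tau f_choice] by blast
  interpret wl2 f \<eta> \<Lambda> Ee Oo
    by unfold_locales (use odd pr generic_eta in auto)
  have gv: "gv v" unfolding gv_def by (rule generic_v)
  have gl: "gl lam" unfolding gl_def by (rule generic_lambda)
  show ?thesis by (rule main_abs[OF gv gl j2_le K])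
qed

end
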